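(* Let $a,b,g,m,n>0$ and $0<e<1$, and consider the planar system $$\dot x=a-ex-\frac{xy}{1+gy},\qquad \dot y=\frac{xy}{1+gy}-y-\frac{my}{b+ny}.$$ Let $E_0=\left(\frac{a}{e},0\right)$ be its disease-free equilibrium. Then: (1) if $a<\frac{e(m+b)}{b}$, $E_0$ is locally asymptotically stable and is a stable node; if $a>\frac{e(m+b)}{b}$, $E_0$ is a saddle point; (2) if $a=\frac{e(m+b)}{b}$ and $n\neq\frac{(eg+1)b^2+m(eg+1)b}{me}$, then $E_0$ is a saddle-node.
   Context: The system is a rescaled SIR epidemic model with saturated infection rate and saturated treatment rate; $x$ is the (rescaled) susceptible population and $y$ the (rescaled) infected population. *)

theory Defs
  imports "HOL-Analysis.Analysis"
begin

definition sir_field :: "real \<Rightarrow> real \<Rightarrow> real \<Rightarrow> real \<Rightarrow> real \<Rightarrow> real \<Rightarrow> real \<times> real \<Rightarrow> real \<times> real" where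
  "sir_field a b e g m n = (\<lambda>(x, y).
     (a - e * x - x * y / (1 + g * y),
      x * y / (1 + g * y) - y - m * y / (b + n * y)))"

definition is_solution :: "(real \<times> real \<Rightarrow> real \<times> real) \<Rightarrow> (real \<Rightarrow> real \<times> real) \<Rightarrow> bool" where
  "is_solution F z \<longleftrightarrow> (\<forall>t\<ge>0. (z has_vector_derivative F (z t)) (at t within {0..}))"

definition loc_asymp_stable :: "(real \<times> real \<Rightarrow> real \<times> real) \<Rightarrow> real \<times> real \<Rightarrow> bool" where
  "loc_asymp_stable F p \<longleftrightarrow> F p = 0 \<and>
     (\<forall>\<epsilon>>0. \<exists>\<delta>>0. \<forall>z. is_solution F z \<and> dist (z 0) p < \<delta> \<longrightarrow> (\<forall>t\<ge>0. dist (z t) p < \<epsilon>)) \<and>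
     (\<exists>\<delta>>0. \<forall>z. is_solution F z \<and> dist (z 0) p < \<delta> \<longrightarrow> (z \<longlongrightarrow> p) at_top)"

definition jac11 where "jac11 F p = fst (frechet_derivative F (at p) (1, 0))"
definition jac12 where "jac12 F p = fst (frechet_derivative F (at p) (0, 1))"
definition jac21 where "jac21 F p = snd (frechet_derivative F (at p) (1, 0))"
definition jac22 where "jac22 F p = snd (frechet_derivative F (at p) (0, 1))"

definition jac_trace :: "(real \<times> real \<Rightarrow> real \<times> real) \<Rightarrow> real \<times> real \<Rightarrow> real" where
  "jac_trace F p = jac11 F p + jac22 F p"
definition jac_det :: "(real \<times> real \<Rightarrow> real \<times> real) \<Rightarrow> real \<times> real \<Rightarrow> real" where
  "jac_det F p = jac11 F p * jac22 F p - jac12 F p * jac21 F p"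

definition jac_eigenvalue :: "(real \<times> real \<Rightarrow> real \<times> real) \<Rightarrow> real \<times> real \<Rightarrow> complex \<Rightarrow> bool" where
  "jac_eigenvalue F p z \<longleftrightarrow>
     z ^ 2 - complex_of_real (jac_trace F p) * z + complex_of_real (jac_det F p) = 0"

definition stable_node :: "(real \<times> real \<Rightarrow> real \<times> real) \<Rightarrow> real \<times> real \<Rightarrow> bool" where
  "stable_node F p \<longleftrightarrow> F p = 0 \<and> F differentiable (at p) \<and>
     (\<forall>z. jac_eigenvalue F p z \<longrightarrow> Im z = 0 \<and> Re z < 0)"

definition saddle_point :: "(real \<times> real \<Rightarrow> real \<times> real) \<Rightarrow> real \<times> real \<Rightarrow> bool" where
  "saddle_point F p \<longleftrightarrow> F p = 0 \<and> F differentiable (at p) \<and>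
     (\<exists>l1 l2 :: real. l1 < 0 \<and> 0 < l2 \<and>
        jac_eigenvalue F p (complex_of_real l1) \<and> jac_eigenvalue F p (complex_of_real l2))"

text \<open>Saddle-node: a simple zero eigenvalue with the other eigenvalue nonzero, together
  with the saddle-node nondegeneracy condition: for a right null vector v and left null
  vector l of the Jacobian, the second directional derivative of l . F along v at p
  (the quadratic coefficient of the centre-manifold reduction, up to a nonzero factor)
  is nonzero.\<close>
definition saddle_node :: "(real \<times> real \<Rightarrow> real \<times> real) \<Rightarrow> real \<times> real \<Rightarrow> bool" where
  "saddle_node F p \<longleftrightarrow> F p = 0 \<and> F differentiable (at p) \<and>
     jac_eigenvalue F p 0 \<and> jac_trace F p \<noteq> 0 \<and>
     (\<exists>v l c. v \<noteq> 0 \<and> l \<noteq> 0 \<and> c \<noteq> 0 \<and>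
        frechet_derivative F (at p) v = 0 \<and>
        (\<forall>w. l \<bullet> frechet_derivative F (at p) w = 0) \<and>
        (\<forall>\<^sub>F t in nhds 0. (\<lambda>s. l \<bullet> F (p + s *\<^sub>R v)) differentiable (at t)) \<and>
        (deriv (\<lambda>s. l \<bullet> F (p + s *\<^sub>R v)) has_real_derivative c) (at 0))"

end

theory Submission
  imports Defs
begin

lemma decay_lemma:
  fixes z :: "real \<Rightarrow> real \<times> real" and V :: "real \<times> real \<Rightarrow> real"
  assumes sol: "\<And>t. t \<ge> 0 \<Longrightarrow> (z has_vector_derivative G (z t)) (at t within {0..})"
    and Vder: "\<And>q. (V has_derivative DV q) (at q)"
    and key: "\<And>q. V q < R \<Longrightarrow> DV q (G q) \<le> - c * V q"
    and Vnn: "\<And>q. V q \<ge> 0"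
    and c: "c \<ge> 0"
    and V0: "V (z 0) < R"
  shows "\<forall>t\<ge>0. V (z t) \<le> exp (- c * t) * V (z 0)"
proof -
  define f where "f t = exp (c * t) * V (z t)" for t
  have zc: "continuous_on {0..} z"
    unfolding continuous_on_eq_continuous_within
    by (intro ballI has_vector_derivative_continuous[OF sol]) simp
  have Vc: "continuous_on UNIV V"
    using Vder has_derivative_continuous continuous_on_eq_continuous_within by blast
  have fc: "continuous_on {0..} f"
    unfolding f_def
    by (intro continuous_intros continuous_on_compose2[OF Vc zc]) auto
  have fder: "(f has_real_derivative exp (c * t) * (c * V (z t) + DV (z t) (G (z t)))) (at t)"
    if "t > 0" for t
  proof -
    have "(z has_vector_derivative G (z t)) (at t within {0<..})"
      using sol[of t] that by (auto intro: has_vector_derivative_within_subset)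
    then have zd: "(z has_vector_derivative G (z t)) (at t)"
      using at_within_open[of t "{0<..}"] that by auto
    have "((\<lambda>s. V (z s)) has_derivative (\<lambda>h. DV (z t) (h *\<^sub>R G (z t)))) (at t)"
      using has_derivative_compose[OF zd[unfolded has_vector_derivative_def] Vder] .
    moreover have "linear (DV (z t))" using Vder has_derivative_linear by blast
    ultimately have "((\<lambda>s. V (z s)) has_real_derivative DV (z t) (G (z t))) (at t)"
      unfolding has_field_derivative_def
      by (simp add: linear_cmul[of "DV (z t)"] mult.commute[of _ "DV (z t) (G (z t))"])
    moreover have "((\<lambda>t. exp (c * t)) has_real_derivative exp (c * t) * c) (at t)"
      by (auto intro!: derivative_eq_intros)
    ultimately have "((\<lambda>t. exp (c * t) * V (z t)) has_real_derivative
        exp (c * t) * c * V (z t) + DV (z t) (G (z t)) * exp (c * t)) (at t)"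
      using DERIV_mult by blast
    then show ?thesis unfolding f_def
      by (rule DERIV_cong) (simp add: algebra_simps)
  qed
  have mono: "f t \<le> f 0" if tpos: "t > 0" and bel: "\<And>s. 0 < s \<Longrightarrow> s < t \<Longrightarrow> V (z s) < R" for t
  proof -
    have "\<exists>l \<xi>. 0 < \<xi> \<and> \<xi> < t \<and> DERIV f \<xi> :> l \<and> f t - f 0 = (t - 0) * l"
      apply (rule MVT[OF tpos])
       apply (rule continuous_on_subset[OF fc]) apply force
      using fder real_differentiable_def by blast
    then obtain l \<xi> where l: "0 < \<xi>" "\<xi> < t" "DERIV f \<xi> :> l" "f t - f 0 = (t - 0) * l"
      by blast
    have "l = exp (c * \<xi>) * (c * V (z \<xi>) + DV (z \<xi>) (G (z \<xi>)))"
      using DERIV_unique[OF l(3) fder[OF l(1)]] .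
    moreover have "c * V (z \<xi>) + DV (z \<xi>) (G (z \<xi>)) \<le> 0"
      using key[OF bel[OF l(1,2)]] by simp
    ultimately have "l \<le> 0" by (simp add: mult_nonneg_nonpos)
    then show ?thesis using l(4) tpos mult_pos_neg[of t l] by (cases "l = 0") auto
  qed
  have stay: "V (z t) < R" if "t \<ge> 0" for t
  proof (rule ccontr)
    assume "\<not> V (z t) < R"
    define S where "S = {s \<in> {0..t}. R \<le> V (z s)}"
    have cS: "closed S"
    proof -
      have "continuous_on {0..t} (\<lambda>s. V (z s))"
        using continuous_on_compose2[OF Vc continuous_on_subset[OF zc]] by auto
      then have "closed ({0..t} \<inter> (\<lambda>s. V (z s)) -` {R..})"
        by (rule continuous_closed_preimage) auto
      moreover have "{0..t} \<inter> (\<lambda>s. V (z s)) -` {R..} = S" by (auto simp: S_def)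
      ultimately show ?thesis by simp
    qed
    have "t \<in> S" using \<open>\<not> V (z t) < R\<close> that by (auto simp: S_def)
    then have T: "Inf S \<in> S"
      by (intro closed_contains_Inf cS) (auto simp: S_def bdd_below_def)
    define T where "T = Inf S"
    have T0: "T > 0" using T V0 unfolding S_def T_def
      by (metis (no_types, lifting) atLeastAtMost_iff less_eq_real_def linorder_not_le mem_Collect_eq)
    have below: "V (z s) < R" if "0 < s" "s < T" for s
    proof (rule ccontr)
      assume "\<not> V (z s) < R"
      then have "s \<in> S" using that T unfolding S_def T_def by auto
      then have "T \<le> s" unfolding T_def by (intro cInf_lower) (auto simp: S_def bdd_below_def)
      then show False using that by simp
    qed
    have "f T \<le> f 0" using mono[OF T0 below] by blast
    then have "exp (c * T) * V (z T) \<le> V (z 0)" by (simp add: f_def)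
    moreover have "V (z T) \<le> exp (c * T) * V (z T)"
      using Vnn[of "z T"] c T0 by (simp add: mult_le_cancel_right1)
    moreover have "R \<le> V (z T)" using T unfolding S_def T_def by auto
    ultimately show False using V0 by linarith
  qed
  show ?thesis
  proof (intro allI impI)
    fix t :: real assume "t \<ge> 0"
    show "V (z t) \<le> exp (- c * t) * V (z 0)"
    proof (cases "t = 0")
      case True then show ?thesis by simp
    next
      case False
      then have "f t \<le> f 0" using \<open>t \<ge> 0\<close> by (intro mono stay) auto
      then have "exp (c * t) * V (z t) \<le> V (z 0)" by (simp add: f_def)
      then have "exp (-c*t) * (exp (c * t) * V (z t)) \<le> exp (-c*t) * V (z 0)"
        by (simp add: mult_left_mono)
      then show ?thesis by (simp add: mult.assoc[symmetric] exp_add[symmetric])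
    qed
  qed
qed
lemma key_ineq:
  fixes u y w hh e M mu K c :: real
  assumes e: "e > 0" and mu: "mu > 0" and w: "\<bar>w\<bar> < M" and hh: "hh < - mu"
    and K: "K = 1 + M^2/(e*mu)" and c: "c = min e mu"
  shows "2*u*(-e*u - w*y) + 2*K*y*(y*hh) \<le> -c*(u^2 + K*y^2)"
proof -
  have M: "M > 0" using w by linarith
  have A1: "-2*w*u*y \<le> 2*M*\<bar>u\<bar>*\<bar>y\<bar>"
  proof -
    have "-2*w*u*y \<le> 2*\<bar>w\<bar>*\<bar>u\<bar>*\<bar>y\<bar>"
    proof -
      have "-(w*u*y) \<le> \<bar>w*u*y\<bar>" by (rule abs_ge_minus_self)
      moreover have "\<bar>w*u*y\<bar> = \<bar>w\<bar>*\<bar>u\<bar>*\<bar>y\<bar>" by (simp add: abs_mult)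
      ultimately show ?thesis by linarith
    qed
    also have "\<dots> \<le> 2*M*\<bar>u\<bar>*\<bar>y\<bar>"
      using w by (intro mult_right_mono) auto
    finally show ?thesis .
  qed
  have A2: "2*M*\<bar>u\<bar>*\<bar>y\<bar> \<le> e*u^2 + M^2/e*y^2"
  proof -
    have "0 \<le> (e*\<bar>u\<bar> - M*\<bar>y\<bar>)^2" by simp
    then have "2*e*M*\<bar>u\<bar>*\<bar>y\<bar> \<le> e^2*u^2 + M^2*y^2"
      by (simp add: power2_eq_square algebra_simps)
    then have "e*(2*M*\<bar>u\<bar>*\<bar>y\<bar>) \<le> e*(e*u^2 + M^2/e*y^2)"
      using e by (simp add: algebra_simps power2_eq_square)
    then show ?thesis using e by simp
  qed
  have Kpos: "K \<ge> 1" using K e mu by simp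
  have B: "2*K*y*(y*hh) \<le> -2*K*mu*y^2"
  proof -
    have eq: "y*(y*hh) = y^2*hh" by (simp add: power2_eq_square)
    have le: "y^2*hh \<le> y^2*(-mu)" using hh by (intro mult_left_mono) auto
    have "y*(y*hh) \<le> -mu*y^2" unfolding eq using le by (simp add: mult.commute)
    then have "2*K*(y*(y*hh)) \<le> 2*K*(-mu*y^2)" using Kpos by (intro mult_left_mono) auto
    moreover have "2*K*y*(y*hh) = 2*K*(y*(y*hh))" by (simp only: mult.assoc)
    moreover have "2*K*(-mu*y^2) = -2*K*mu*y^2" by (simp only: mult.assoc mult_minus_left mult_minus_right)
    ultimately show ?thesis by linarith
  qed
  have C: "M^2/e = (K-1)*mu" using K e mu by (simp add: field_simps)
  have D: "2*u*(-e*u - w*y) + 2*K*y*(y*hh) \<le> -e*u^2 - (K+1)*mu*y^2"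
  proof -
    have "2*u*(-e*u - w*y) + 2*K*y*(y*hh) = -2*e*u^2 + (-2*w*u*y) + 2*K*y*(y*hh)"
      by (simp add: algebra_simps power2_eq_square)
    also have "\<dots> \<le> -2*e*u^2 + (e*u^2 + M^2/e*y^2) + (-2*K*mu*y^2)"
      using A1 A2 B by linarith
    also have "\<dots> = -e*u^2 - (K+1)*mu*y^2"
    proof -
      have C': "M^2/e*y^2 = (K-1)*mu*y^2" using C by simp
      show ?thesis unfolding C' by (simp add: algebra_simps)
    qed
    finally show ?thesis .
  qed
  have E1: "c*u^2 \<le> e*u^2" using c by (intro mult_right_mono) auto
  have E2: "c*K*y^2 \<le> (K+1)*mu*y^2"
  proof -
    have "c*K \<le> mu*K" using c Kpos by (intro mult_right_mono) auto
    also have "\<dots> \<le> (K+1)*mu" using mu by (simp add: algebra_simps)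
    finally show ?thesis by (intro mult_right_mono) auto
  qed
  show ?thesis using D E1 E2 by (simp add: algebra_simps)
qed
lemma dist2: "dist q (x0, 0::real) ^ 2 = (fst q - x0)^2 + (snd q)^2"
  by (cases q) (simp add: dist_Pair_Pair dist_real_def)

lemma stab:
  fixes a b e g m n :: real
  assumes pos: "a > 0" "b > 0" "g > 0" "m > 0" "n > 0" "e > 0" and lamneg: "a/e - 1 - m/b < 0"
  shows "loc_asymp_stable (sir_field a b e g m n) (a/e, 0)"
proof -
  define x0 where "x0 = a/e"
  define lam where "lam = x0 - 1 - m/b"
  define F where "F = sir_field a b e g m n"
  define p where "p = (x0, 0::real)"
  define w where "w q = fst q/(1+g* snd q)" for q :: "real \<times> real"
  define hh where "hh q = w q - 1 - m/(b+n* snd q)" for q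
  define mu where "mu = -lam/2"
  define M where "M = \<bar>x0\<bar> + 1"
  have mu: "mu > 0" using lamneg by (simp add: mu_def lam_def x0_def)
  have ax: "a = e * x0" using pos by (simp add: x0_def)
  have wc: "isCont w p" unfolding w_def p_def by (intro continuous_intros) auto
  have hc: "isCont hh p" unfolding hh_def w_def p_def using pos by (intro continuous_intros) auto
  have wp: "w p = x0" by (simp add: w_def p_def)
  have hp: "hh p = lam" by (simp add: hh_def wp lam_def) (simp add: p_def)
  obtain d1 where d1: "d1 > 0" "\<And>q. dist q p < d1 \<Longrightarrow> dist (hh q) (hh p) < mu"
    using hc mu unfolding continuous_at_eps_delta by blast
  obtain d2 where d2: "d2 > 0" "\<And>q. dist q p < d2 \<Longrightarrow> dist (w q) (w p) < 1"
    using wc unfolding continuous_at_eps_delta by (meson zero_less_one)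
  define r where "r = min d1 d2"
  have r: "r > 0" using d1 d2 by (simp add: r_def)
  have near: "hh q < - mu \<and> \<bar>w q\<bar> < M" if "dist q p < r" for q
  proof -
    have "dist (hh q) lam < mu" using d1(2)[of q] that hp by (simp add: r_def)
    then have "hh q < lam + mu" by (simp add: dist_real_def abs_less_iff)
    moreover have "dist (w q) x0 < 1" using d2(2)[of q] that wp by (simp add: r_def)
    then have "\<bar>w q\<bar> < M" unfolding M_def dist_real_def by linarith
    ultimately show ?thesis by (simp add: mu_def)
  qed
  define K where "K = 1 + M^2/(e*mu)"
  define c where "c = min e mu"
  have K1: "K \<ge> 1" using mu pos by (simp add: K_def)
  have c: "c > 0" using mu pos by (simp add: c_def)
  have dK: "x / K \<le> x" if "x \<ge> 0" for x :: real
  proof -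
    have "x * 1 \<le> x * K" using K1 that by (intro mult_left_mono) auto
    then show ?thesis using K1 by (simp add: divide_le_eq)
  qed
  define V where "V q = (fst q - x0)^2 + K*(snd q)^2" for q :: "real \<times> real"
  define DV where "DV q = (\<lambda>h::real\<times>real. 2*(fst q - x0)* fst h + 2*K* snd q* snd h)" for q :: "real \<times> real"
  have Vder: "(V has_derivative DV q) (at q)" for q
    unfolding V_def DV_def
    apply (rule has_derivative_eq_rhs)
     apply (rule derivative_eq_intros | simp)+
    apply (simp add: fun_eq_iff algebra_simps)
    done
  have Vnn: "V q \<ge> 0" for q using K1 by (simp add: V_def)
  have Vge: "dist q p ^ 2 \<le> V q" for q
    unfolding p_def dist2 V_def using K1 mult_right_mono[of 1 K "(snd q)^2"] by simp
  have Vle: "V q \<le> K * dist q p ^ 2" for q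
    unfolding p_def dist2 V_def using K1 mult_right_mono[of 1 K "(fst q - x0)^2"] by (simp add: algebra_simps)
  have Fform: "F q = (-e*(fst q - x0) - w q * snd q, snd q * hh q)" for q
    by (simp add: F_def sir_field_def case_prod_beta w_def hh_def ax algebra_simps)
  have key: "DV q (F q) \<le> - c * V q" if "V q < r^2" for q
  proof -
    have "dist q p ^2 < r^2" using Vge[of q] that by linarith
    then have "dist q p < r" using r by (simp add: power_less_imp_less_base)
    then have nq: "hh q < - mu" "\<bar>w q\<bar> < M" using near by auto
    have "DV q (F q) = 2*(fst q - x0)*(-e*(fst q - x0) - w q* snd q) + 2*K* snd q*(snd q*hh q)"
      by (simp add: Fform DV_def)
    also have "\<dots> \<le> -c*((fst q - x0)^2 + K*(snd q)^2)"
      by (rule key_ineq[OF pos(6) mu nq(2) nq(1) K_def c_def])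
    finally show ?thesis by (simp add: V_def)
  qed
  have decay: "\<forall>t\<ge>0. V (z t) \<le> exp (- c * t) * V (z 0)" if "is_solution F z" "V (z 0) < r^2" for z
    using that(1) unfolding is_solution_def
    by (intro decay_lemma[where G=F and DV=DV and R="r^2"]) (use Vder key Vnn c that(2) in auto)
  have Fp: "F p = 0" by (simp add: F_def p_def sir_field_def ax zero_prod_def)
  have part1: "\<exists>\<delta>>0. \<forall>z. is_solution F z \<and> dist (z 0) p < \<delta> \<longrightarrow> (\<forall>t\<ge>0. dist (z t) p < \<epsilon>)"
    if eps: "\<epsilon> > 0" for \<epsilon>
  proof (intro exI[of _ "min r \<epsilon> / K"] conjI allI impI)
    show "min r \<epsilon> / K > 0" using r eps K1 by simp
    fix z t assume zz: "is_solution F z \<and> dist (z 0) p < min r \<epsilon> / K" and t: "t \<ge> (0::real)"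
    have "dist (z 0) p < min r \<epsilon>"
    proof -
      have "min r \<epsilon> / K \<le> min r \<epsilon>" using r eps by (intro dK) auto
      then show ?thesis using zz by linarith
    qed
    then have "dist (z 0) p ^ 2 < (min r \<epsilon>)^2" by (simp add: power_strict_mono)
    have V0: "V (z 0) < (min r \<epsilon>)^2"
    proof -
      have "V (z 0) \<le> K * dist (z 0) p ^ 2" by (rule Vle)
      also have "\<dots> < K * (min r \<epsilon> / K)^2" using zz K1 by (intro mult_strict_left_mono power_strict_mono) auto
      also have "\<dots> = (min r \<epsilon>)^2 / K" using K1 by (simp add: power2_eq_square field_simps)
      also have "\<dots> \<le> (min r \<epsilon>)^2" by (intro dK) simp
      finally show ?thesis .
    qed
    have "(min r \<epsilon>)^2 \<le> r^2" using r eps by (intro power_mono) auto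
    then have "V (z 0) < r^2" using V0 by linarith
    then have "V (z t) \<le> exp (-c*t) * V (z 0)" using decay zz t by blast
    also have "\<dots> \<le> 1 * V (z 0)" using c t Vnn[of "z 0"] by (intro mult_right_mono) auto
    also have "\<dots> = V (z 0)" by simp
    finally have "V (z t) \<le> V (z 0)" .
    moreover have "(min r \<epsilon>)^2 \<le> \<epsilon>^2" using r eps by (intro power_mono) auto
    ultimately have "dist (z t) p ^ 2 < \<epsilon>^2"
      using Vge[of "z t"] V0 by linarith
    then show "dist (z t) p < \<epsilon>" using eps by (simp add: power_less_imp_less_base)
  qed
  have part2: "\<exists>\<delta>>0. \<forall>z. is_solution F z \<and> dist (z 0) p < \<delta> \<longrightarrow> (z \<longlongrightarrow> p) at_top"
  proof (intro exI[of _ "r / K"] conjI allI impI)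
    show "r / K > 0" using r K1 by simp
    fix z assume zz: "is_solution F z \<and> dist (z 0) p < r / K"
    have V0: "V (z 0) < r^2"
    proof -
      have "V (z 0) \<le> K * dist (z 0) p ^ 2" by (rule Vle)
      also have "\<dots> < K * (r / K)^2" using zz K1 by (intro mult_strict_left_mono power_strict_mono) auto
      also have "\<dots> = r^2 / K" using K1 by (simp add: power2_eq_square field_simps)
      also have "\<dots> \<le> r^2" by (intro dK) simp
      finally show ?thesis .
    qed
    have bnd: "dist (z t) p \<le> sqrt (exp (-c*t) * V (z 0))" if "t \<ge> 0" for t
    proof -
      have "V (z t) \<le> exp (-c*t) * V (z 0)" using decay[of z] V0 zz that by blast
      then have "dist (z t) p ^ 2 \<le> exp (-c*t) * V (z 0)" using Vge[of "z t"] by linarith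
      then show ?thesis by (simp add: real_le_rsqrt)
    qed
    have lim0: "((\<lambda>t. exp (-c*t)) \<longlongrightarrow> 0) at_top" 
      by (rule filterlim_compose[OF exp_at_bot filterlim_tendsto_neg_mult_at_bot[OF tendsto_const _ filterlim_ident]]) (simp add: c)
    have "((\<lambda>t. sqrt (exp (-c*t) * V (z 0))) \<longlongrightarrow> sqrt (0 * V (z 0))) at_top"
      by (intro tendsto_intros lim0)
    then have lim1: "((\<lambda>t. sqrt (exp (-c*t) * V (z 0))) \<longlongrightarrow> 0) at_top" by simp
    have "((\<lambda>t. dist (z t) p) \<longlongrightarrow> 0) at_top"
    proof (rule tendsto_sandwich[OF _ _ tendsto_const lim1])
      show "\<forall>\<^sub>F t in at_top. 0 \<le> dist (z t) p" by simp
      show "\<forall>\<^sub>F t in at_top. dist (z t) p \<le> sqrt (exp (-c*t) * V (z 0))"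
        using eventually_ge_at_top[of 0] by eventually_elim (rule bnd)
    qed
    then show "(z \<longlongrightarrow> p) at_top" by (rule iffD2[OF tendsto_dist_iff])
  qed
  show ?thesis
    unfolding loc_asymp_stable_def F_def[symmetric] p_def[unfolded x0_def, symmetric]
    using Fp part1 part2 by blast
qed

lemma sir_eq: "sir_field a b e g m n = (\<lambda>q. (a - e* fst q - fst q* snd q/(1+g* snd q),
   fst q* snd q/(1+g* snd q) - snd q - m* snd q/(b+n* snd q)))"
  by (simp add: sir_field_def case_prod_beta fun_eq_iff)

lemma sir_deriv:
  fixes a b e g m n x0 :: real
  assumes "b > 0"
  shows "(sir_field a b e g m n has_derivative (\<lambda>q. (-e* fst q - x0* snd q, (x0 - 1 - m/b)* snd q))) (at (x0,0))"
proof -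
  have bnz: "b \<noteq> 0" using assms by simp
  show ?thesis
  unfolding sir_eq
  apply (rule has_derivative_eq_rhs)
   apply (rule derivative_eq_intros | simp add: bnz)+
  apply (simp add: fun_eq_iff field_simps bnz)
  done
qed
lemma jac_facts:
  fixes e x0 lam :: real
  assumes d: "(F has_derivative (\<lambda>q. (-e * fst q - x0 * snd q, lam * snd q))) (at p)"
  shows "jac_trace F p = -e + lam" "jac_det F p = -e * lam"
    "jac_eigenvalue F p z \<longleftrightarrow> (z + of_real e) * (z - of_real lam) = 0"
    "frechet_derivative F (at p) = (\<lambda>q. (-e * fst q - x0 * snd q, lam * snd q))"
proof -
  note fd = frechet_derivative_at[OF d, symmetric]
  show "frechet_derivative F (at p) = (\<lambda>q. (-e * fst q - x0 * snd q, lam * snd q))" by (rule fd)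
  show t: "jac_trace F p = -e + lam"
    by (simp add: jac_trace_def jac11_def jac22_def fd)
  show dt: "jac_det F p = -e * lam"
    by (simp add: jac_det_def jac11_def jac22_def jac12_def jac21_def fd)
  show "jac_eigenvalue F p z \<longleftrightarrow> (z + of_real e) * (z - of_real lam) = 0"
    unfolding jac_eigenvalue_def t dt
    by (simp add: algebra_simps power2_eq_square)
qed

lemma eig_cases:
  fixes e lam :: real and z :: complex
  assumes "(z + of_real e) * (z - of_real lam) = 0"
  shows "z = of_real (-e) \<or> z = of_real lam"
proof -
  from assms have "z + of_real e = 0 \<or> z - of_real lam = 0" by simp
  then show ?thesis by (auto simp: eq_neg_iff_add_eq_0)
qed


lemma sn_part:
  fixes a b e g m n :: real
  assumes pos: "a > 0" "b > 0" "g > 0" "m > 0" "n > 0" "e > 0"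
    and ha: "a = e * (m + b) / b"
    and hn: "n \<noteq> ((e * g + 1) * b ^ 2 + m * (e * g + 1) * b) / (m * e)"
  shows "saddle_node (sir_field a b e g m n) (a / e, 0)"
proof -
  define x0 where "x0 = a / e"
  have x0v: "x0 = (m + b) / b" using pos by (simp add: x0_def ha)
  have lam0: "x0 - 1 - m/b = 0" using pos by (simp add: x0v field_simps)
  define F where "F = sir_field a b e g m n"
  have d: "(F has_derivative (\<lambda>q. (-e * fst q - x0 * snd q, 0 * snd q))) (at (x0, 0))"
    using sir_deriv[OF pos(2), of a e g m n x0] unfolding lam0 F_def .
  note J = jac_facts[OF d]
  have ax: "a = e * x0" using pos by (simp add: x0_def)
  have Fp: "F (x0, 0) = 0" by (simp add: F_def sir_field_def ax zero_prod_def)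
  define v where "v = (-x0, e)"
  define l where "l = (0::real, 1::real)"
  define H where "H s = (x0 + s*(-x0))*(s*e)/(1+g*(s*e)) - s*e - m*(s*e)/(b+n*(s*e))" for s :: real
  define H' where "H' s = (((-x0)*(s*e) + (x0 + s*(-x0))*e)*(1+g*(s*e)) - (x0 + s*(-x0))*(s*e)*(g*e))/((1+g*(s*e))*(1+g*(s*e)))
      - e - (m*e*(b+n*(s*e)) - m*(s*e)*(n*e))/((b+n*(s*e))*(b+n*(s*e)))" for s :: real
  define c where "c = 2*e^2*(m*n/b^2 - x0*(1+g*e)/e)"
  have Heq: "(\<lambda>s. l \<bullet> F ((x0, 0) + s *\<^sub>R v)) = H"
    by (simp add: fun_eq_iff l_def v_def F_def sir_field_def H_def)
  define S where "S = {s::real. 0 < 1+g*(s*e) \<and> 0 < b+n*(s*e)}"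
  have oS: "open S" unfolding S_def
    by (intro open_Collect_conj open_Collect_less continuous_intros)
  have S0: "0 \<in> S" using pos by (simp add: S_def)
  have DH: "(H has_real_derivative H' s) (at s)" if "s \<in> S" for s
  proof -
    have n1: "1+g*(s*e) \<noteq> 0" "b+n*(s*e) \<noteq> 0" using that by (auto simp: S_def)
    show ?thesis unfolding H_def H'_def
      apply (rule derivative_eq_intros | simp add: n1)+
      apply (simp add: n1 field_simps)
      done
  qed
  have DH': "(H' has_real_derivative c) (at 0)"
    unfolding H'_def c_def
    using pos apply -
    apply (rule derivative_eq_intros | simp add: pos less_imp_neq[OF pos(2), symmetric])+
    apply (simp add: field_simps power2_eq_square less_imp_neq[OF pos(6), symmetric])
    done
  have dH: "deriv H s = H' s" if "s \<in> S" for s using DH[OF that] by (rule DERIV_imp_deriv)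
  have cnz: "c \<noteq> 0"
  proof
    assume "c = 0"
    then have "m*n/b^2 = x0*(1+g*e)/e" using pos by (simp add: c_def)
    then have "n = ((e * g + 1) * b ^ 2 + m * (e * g + 1) * b) / (m * e)"
      using pos by (simp add: x0v field_simps power2_eq_square) 
    then show False using hn by simp
  qed
  have ev: "\<forall>\<^sub>F t in nhds 0. H differentiable (at t)"
    unfolding eventually_nhds using oS S0 DH real_differentiable_def by blast
  have dd: "(deriv H has_real_derivative c) (at 0)"
    using has_field_derivative_transform_within_open[OF DH' oS S0] dH by metis
  show ?thesis
    unfolding saddle_node_def F_def[symmetric] x0_def[symmetric]
  proof (intro conjI)
    show "F (x0, 0) = 0" by (rule Fp)
    show "F differentiable at (x0, 0)" using d by (rule differentiableI)
    show "jac_eigenvalue F (x0, 0) 0" using J(3) by simp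
    show "jac_trace F (x0, 0) \<noteq> 0" using J(1) pos by simp
    show "\<exists>v l c. v \<noteq> 0 \<and> l \<noteq> 0 \<and> c \<noteq> 0 \<and>
        frechet_derivative F (at (x0, 0)) v = 0 \<and>
        (\<forall>w. l \<bullet> frechet_derivative F (at (x0, 0)) w = 0) \<and>
        (\<forall>\<^sub>F t in nhds 0. (\<lambda>s. l \<bullet> F ((x0, 0) + s *\<^sub>R v)) differentiable (at t)) \<and>
        (deriv (\<lambda>s. l \<bullet> F ((x0, 0) + s *\<^sub>R v)) has_real_derivative c) (at 0)"
    proof (rule exI[of _ v], rule exI[of _ l], rule exI[of _ c], intro conjI)
      show "v \<noteq> 0" using pos by (simp add: v_def zero_prod_def)
      show "l \<noteq> 0" by (simp add: l_def zero_prod_def)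
      show "c \<noteq> 0" by (rule cnz)
      show "frechet_derivative F (at (x0, 0)) v = 0" using J(4) by (simp add: v_def zero_prod_def)
      show "\<forall>w. l \<bullet> frechet_derivative F (at (x0, 0)) w = 0" using J(4) by (simp add: l_def)
      show "\<forall>\<^sub>F t in nhds 0. (\<lambda>s. l \<bullet> F ((x0, 0) + s *\<^sub>R v)) differentiable at t" unfolding Heq by (rule ev)
      show "(deriv (\<lambda>s. l \<bullet> F ((x0, 0) + s *\<^sub>R v)) has_real_derivative c) (at 0)" unfolding Heq by (rule dd)
    qed
  qed
qed


theorem theorem2p1:
  fixes a b e g m n :: real
  assumes "a > 0" "b > 0" "g > 0" "m > 0" "n > 0" "0 < e" "e < 1"
  shows "(a < e * (m + b) / b \<longrightarrow>
            loc_asymp_stable (sir_field a b e g m n) (a / e, 0) \<and>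
            stable_node (sir_field a b e g m n) (a / e, 0))
       \<and> (a > e * (m + b) / b \<longrightarrow> saddle_point (sir_field a b e g m n) (a / e, 0))
       \<and> (a = e * (m + b) / b \<and> n \<noteq> ((e * g + 1) * b ^ 2 + m * (e * g + 1) * b) / (m * e) \<longrightarrow>
            saddle_node (sir_field a b e g m n) (a / e, 0))"
proof -
  note pos = assms
  define x0 where "x0 = a / e"
  define lam where "lam = x0 - 1 - m/b"
  define F where "F = sir_field a b e g m n"
  have d: "(F has_derivative (\<lambda>q. (-e * fst q - x0 * snd q, lam * snd q))) (at (x0, 0))"
    unfolding F_def lam_def by (rule sir_deriv[OF pos(2)])
  note J = jac_facts[OF d]
  have ax: "a = e * x0" using pos by (simp add: x0_def)
  have Fp: "F (x0, 0) = 0" by (simp add: F_def sir_field_def ax zero_prod_def)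
  have Fd: "F differentiable at (x0, 0)" using d by (rule differentiableI)
  have lamiff1: "lam < 0 \<longleftrightarrow> a < e * (m + b) / b"
    using pos by (simp add: lam_def x0_def field_simps)
  have lamiff2: "lam > 0 \<longleftrightarrow> a > e * (m + b) / b"
    using pos by (simp add: lam_def x0_def field_simps)
  have P1: "loc_asymp_stable F (x0, 0) \<and> stable_node F (x0, 0)" if h: "a < e * (m + b) / b"
  proof
    have ln: "lam < 0" using h lamiff1 by simp
    show "loc_asymp_stable F (x0, 0)" unfolding F_def x0_def
      by (rule stab) (use pos ln in \<open>simp_all add: lam_def x0_def\<close>)
    show "stable_node F (x0, 0)" unfolding stable_node_def
    proof (rule conjI[OF Fp conjI[OF Fd]], intro allI impI)
      fix z assume "jac_eigenvalue F (x0, 0) z"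
      then have "z = of_real (-e) \<or> z = of_real lam" using J(3) eig_cases by blast
      then show "Im z = 0 \<and> Re z < 0" using ln pos by auto
    qed
  qed
  have P2: "saddle_point F (x0, 0)" if h: "a > e * (m + b) / b"
  proof -
    have lp: "lam > 0" using h lamiff2 by simp
    show ?thesis unfolding saddle_point_def
      by (intro conjI Fp Fd exI[of _ "-e"] exI[of _ lam]) (use lp pos J(3) in auto)
  qed
  show ?thesis
    using P1 P2 sn_part[OF pos(1-6)] unfolding F_def x0_def by blast
qed

end
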